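(* Let $A=\{a_s(n_s)\}_{s=1}^k$ and $B=\{b_t(m_t)\}_{t=1}^l$ be finite systems of residue classes with positive integer moduli and integers $0\leqslant a_s<n_s$, $0\leqslant b_t<m_t$, such that $n_1,\ldots,n_k$ are pairwise distinct and $m_1,\ldots,m_l$ are pairwise distinct. Let $p$ be a prime with $p>|S(n_1,\ldots,n_k,m_1,\ldots,m_l)|$ and let $\zeta_p$ be a primitive $p$th root of unity. Then $A$ and $B$ are identical (i.e., $k=l$ and $\{(a_s,n_s)\}_{s=1}^k=\{(b_t,m_t)\}_{t=1}^l$) if and only if $$\sum_{s=1}^k\frac{\zeta_p^{a_s}}{1-\zeta_p^{n_s}}=\sum_{t=1}^l\frac{\zeta_p^{b_t}}{1-\zeta_p^{m_t}}.$$
   Context: For a positive integer $n$ and $a\in\{0,\ldots,n-1\}$, $a(n)$ denotes the residue class $\{x\in\mathbb Z: x\equiv a \pmod n\}$. For positive integers $n_1,\ldots,n_k$, $S(n_1,\ldots,n_k)=\{r/n_s: r=0,\ldots,n_s-1;\ s=1,\ldots,k\}$, a set of rational numbers, and $|S(\cdot)|$ denotes its cardinality. *)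

theory Defs
  imports Complex_Main "HOL-Computational_Algebra.Primes"
begin

definition S_set :: "nat set \<Rightarrow> rat set" where
  "S_set M = {of_nat r / of_nat n | r n. n \<in> M \<and> r < n}"

definition primitive_root_unity :: "nat \<Rightarrow> complex \<Rightarrow> bool" where
  "primitive_root_unity p z \<longleftrightarrow> 0 < p \<and> z ^ p = 1 \<and> (\<forall>j. 0 < j \<and> j < p \<longrightarrow> z ^ j \<noteq> 1)"

end

theory Submission
  imports Defs "HOL-Computational_Algebra.Computational_Algebra"
begin

definition iev :: "int poly \<Rightarrow> complex \<Rightarrow> complex" where
  "iev P z = poly (map_poly of_int P) z"

lemma map_poly_of_int_mult:
  "map_poly (of_int::int\<Rightarrow>'a::comm_ring_1) (p*q) = map_poly of_int p * map_poly of_int q"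
  by (simp add: poly_eq_iff coeff_map_poly coeff_mult)

lemma iev_mult [simp]: "iev (p*q) z = iev p z * iev q z"
  by (simp add: iev_def map_poly_of_int_mult)
lemma iev_add [simp]: "iev (p+q) z = iev p z + iev q z"
proof -
  have "map_poly (of_int::int\<Rightarrow>complex) (p+q) = map_poly of_int p + map_poly of_int q"
    by (simp add: poly_eq_iff coeff_map_poly)
  thus ?thesis by (simp add: iev_def)
qed
lemma iev_diff [simp]: "iev (p-q) z = iev p z - iev q z"
proof -
  have "map_poly (of_int::int\<Rightarrow>complex) (p-q) = map_poly of_int p - map_poly of_int q"
    by (simp add: poly_eq_iff coeff_map_poly)
  thus ?thesis by (simp add: iev_def)
qed
lemma iev_monom [simp]: "iev (monom 1 n) z = z ^ n"
proof -
  have "map_poly (of_int::int\<Rightarrow>complex) (monom 1 n) = monom 1 n"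
    by (simp add: poly_eq_iff coeff_map_poly coeff_monom)
  thus ?thesis by (simp add: iev_def poly_monom)
qed
lemma map_poly_of_int_pCons: "map_poly (of_int::int\<Rightarrow>complex) (pCons c p) = pCons (of_int c) (map_poly of_int p)"
  by (simp add: poly_eq_iff coeff_map_poly coeff_pCons split: nat.split)
lemma iev_const [simp]: "iev [:c:] z = of_int c"
  by (simp add: iev_def map_poly_of_int_pCons)
lemma iev_one [simp]: "iev 1 z = 1"
  by (simp add: iev_def)
lemma iev_smult [simp]: "iev (smult c p) z = of_int c * iev p z"
proof -
  have "map_poly (of_int::int\<Rightarrow>complex) (smult c p) = smult (of_int c) (map_poly of_int p)"
    by (simp add: poly_eq_iff coeff_map_poly)
  thus ?thesis by (simp add: iev_def)
qed
lemma iev_zero [simp]: "iev 0 z = 0" by (simp add: iev_def)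
lemma iev_sum [simp]: "iev (sum f A) z = (\<Sum>x\<in>A. iev (f x) z)"
  by (induct A rule: infinite_finite_induct) auto
lemma iev_prod [simp]: "iev (prod f A) z = (\<Prod>x\<in>A. iev (f x) z)"
  by (induct A rule: infinite_finite_induct) auto
lemma iev_x [simp]: "iev [:0,1:] z = z"
  by (simp add: iev_def map_poly_of_int_pCons)

lemma eisenstein_aux:
  fixes G H F :: "int poly" and p :: int
  assumes pr: "prime p" and F: "F = G * H"
    and c0: "coeff F 0 = p"
    and dv: "\<forall>j < degree F. p dvd coeff F j"
    and ld: "\<not> p dvd lead_coeff F"
    and g0: "p dvd coeff G 0" and dH: "degree H > 0"
  shows False
proof -
  have Gnz: "G \<noteq> 0" and Hnz: "H \<noteq> 0" using ld F by auto
  have degF: "degree F = degree G + degree H" using F Gnz Hnz by (simp add: degree_mult_eq)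
  have p1: "p > 1" using pr prime_gt_1_int by blast
  have "coeff F 0 = coeff G 0 * coeff H 0" using F by (simp add: coeff_mult)
  hence prod0: "coeff G 0 * coeff H 0 = p" using c0 by simp
  have h0: "\<not> p dvd coeff H 0"
  proof
    assume "p dvd coeff H 0"
    with g0 have "p * p dvd p" using prod0 by (metis mult_dvd_mono)
    hence "p dvd 1" using p1 by (metis dvd_mult_cancel_left mult.right_neutral not_one_less_zero less_trans zero_less_one)
    thus False using pr by (meson not_prime_unit)
  qed
  have all: "\<forall>i\<le>degree G. p dvd coeff G i"
  proof (intro allI impI)
    fix i show "i \<le> degree G \<Longrightarrow> p dvd coeff G i"
    proof (induction i rule: less_induct)
      case (less i)
      show ?case
      proof (cases "i = 0")
        case True thus ?thesis using g0 by simp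
      next
        case False
        have set: "{..i} = insert i {..<i}" by auto
        have "coeff F i = (\<Sum>j\<le>i. coeff G j * coeff H (i-j))" using F by (simp add: coeff_mult)
        also have "\<dots> = coeff G i * coeff H 0 + (\<Sum>j<i. coeff G j * coeff H (i-j))"
          by (simp add: set)
        finally have eq: "coeff G i * coeff H 0 = coeff F i - (\<Sum>j<i. coeff G j * coeff H (i-j))" by simp
        have "p dvd coeff F i" using dv less.prems dH degF by auto
        moreover have "p dvd (\<Sum>j<i. coeff G j * coeff H (i-j))"
          using less.IH less.prems by (intro dvd_sum) auto
        ultimately have "p dvd coeff G i * coeff H 0" by (simp add: eq)
        thus ?thesis using h0 pr by (simp add: prime_dvd_mult_iff)
      qed
    qed
  qed
  hence "p dvd lead_coeff G" by simp
  hence "p dvd lead_coeff G * lead_coeff H" by simp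
  thus False using ld F by (simp add: lead_coeff_mult)
qed

lemma eisenstein:
  fixes G H F :: "int poly" and p :: int
  assumes pr: "prime p" and F: "F = G * H"
    and c0: "coeff F 0 = p"
    and dv: "\<forall>j < degree F. p dvd coeff F j"
    and ld: "\<not> p dvd lead_coeff F"
  shows "degree G = 0 \<or> degree H = 0"
proof (rule ccontr)
  assume a: "\<not> (degree G = 0 \<or> degree H = 0)"
  have "coeff G 0 * coeff H 0 = p" using F c0 by (simp add: coeff_mult)
  hence "p dvd coeff G 0 * coeff H 0" by simp
  hence "p dvd coeff G 0 \<or> p dvd coeff H 0" using pr by (simp add: prime_dvd_mult_iff)
  thus False
  proof
    assume "p dvd coeff G 0" thus False using eisenstein_aux[OF pr F c0 dv ld] a by auto
  next
    assume "p dvd coeff H 0"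
    moreover have "F = H * G" using F by (simp add: mult.commute)
    ultimately show False using eisenstein_aux[OF pr _ c0 dv ld] a by auto
  qed
qed

definition cyc :: "nat \<Rightarrow> int poly" where
  "cyc p = (\<Sum>i<p. [:0,1:]^i)"

lemma iev_power [simp]: "iev (q ^ i) z = iev q z ^ i"
  by (induct i) auto

lemma iev_cyc: "iev (cyc p) z = (\<Sum>i<p. z^i)"
  by (simp add: cyc_def)

lemma pcompose_x_power: "pcompose ([:0,1:]^i) q = (q::int poly)^i"
  by (induct i) (auto simp: pcompose_mult pcompose_pCons pcompose_1)

lemma coeff_lin_pow: "coeff ([:1,1:]^i :: int poly) j = int (i choose j)"
proof (cases "j \<le> i")
  case True thus ?thesis by (simp add: coeff_linear_poly_power)
next
  case False
  hence "coeff ([:1,1:]^i :: int poly) j = 0"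
    by (intro coeff_eq_0) (simp add: degree_linear_power)
  thus ?thesis using False by simp
qed

lemma coeff_cyc_shift:
  assumes "p > 0"
  shows "coeff (pcompose (cyc p) [:1,1:]) j = int (p choose (j+1))"
proof -
  have "coeff (pcompose (cyc p) [:1,1:]) j = (\<Sum>i<p. int (i choose j))"
    by (simp add: cyc_def pcompose_sum pcompose_x_power coeff_sum coeff_lin_pow)
  also have "\<dots> = int (\<Sum>i<p. (i choose j))" by simp
  also have "{..<p} = {..p-1}" using assms by auto
  also have "(\<Sum>i\<le>p-1. (i choose j)) = Suc (p-1) choose Suc j" by (rule sum_choose_upper)
  finally show ?thesis using assms by simp
qed

lemma cyc_irred:
  assumes pr: "prime p" and eq: "cyc p = g * h"
  shows "degree g = 0 \<or> degree h = 0"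
proof -
  have p0: "p > 1" using pr prime_gt_1_nat by blast
  define F where "F = pcompose (cyc p) [:1,1:]"
  have cF: "\<And>j. coeff F j = int (p choose (j+1))" using coeff_cyc_shift p0 F_def by simp
  have degF: "degree F = p - 1"
  proof (rule antisym)
    show "degree F \<le> p - 1" by (rule degree_le) (auto simp: cF)
    show "p - 1 \<le> degree F" by (rule le_degree) (use p0 in \<open>simp add: cF\<close>)
  qed
  have lF: "lead_coeff F = 1" using degF p0 by (simp add: cF)
  have c0: "coeff F 0 = int p" by (simp add: cF)
  have dv: "\<forall>j < degree F. int p dvd coeff F j"
  proof (intro allI impI)
    fix j assume "j < degree F"
    hence "j + 1 < p" using degF p0 by simp
    hence "p dvd (p choose (j+1))" using pr by (intro dvd_choose_prime) auto
    thus "int p dvd coeff F j" by (simp add: cF)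
  qed
  have ld: "\<not> int p dvd lead_coeff F" using lF p0 by simp
  have Fgh: "F = pcompose g [:1,1:] * pcompose h [:1,1:]"
    by (simp add: F_def eq pcompose_mult)
  have prI: "prime (int p)" using pr by simp
  from eisenstein[OF prI Fgh c0 dv ld] show ?thesis by (simp add: degree_pcompose)
qed

lemma cyc_coeff0: "p > 0 \<Longrightarrow> coeff (cyc p) 0 = 1"
proof -
  assume "p > 0"
  have "coeff (cyc p) 0 = poly (cyc p) 0" by (simp add: poly_0_coeff_0)
  also have "\<dots> = (\<Sum>i<p. (0::int)^i)" by (simp add: cyc_def poly_sum)
  also have "\<dots> = (\<Sum>i\<in>{0}. (0::int)^i)" using \<open>p>0\<close> by (intro sum.mono_neutral_right) auto
  finally show ?thesis by simp
qed

lemma cyc_content: "p > 0 \<Longrightarrow> content (cyc p) = 1"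
proof -
  assume "p > 0"
  have "content (cyc p) dvd coeff (cyc p) 0" by (rule content_dvd_coeff)
  hence "is_unit (content (cyc p))" using cyc_coeff0[OF \<open>p>0\<close>] by simp
  thus ?thesis using normalize_content[of "cyc p"] by simp
qed

lemma cyc_root:
  assumes "w ^ p = 1" "w \<noteq> 1"
  shows "iev (cyc p) w = 0"
proof -
  have "(\<Sum>i<p. w^i) = (1 - w^p) / (1 - w)" using assms(2) by (simp add: sum_gp_strict)
  thus ?thesis using assms by (simp add: iev_cyc)
qed

lemma galois:
  fixes \<zeta> w :: complex
  assumes pr: "prime p" and z1: "\<zeta> ^ p = 1" "\<zeta> \<noteq> 1"
    and w1: "w ^ p = 1" "w \<noteq> 1" and P: "iev P \<zeta> = 0"
  shows "iev P w = 0"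
proof -
  have p0: "p > 0" using pr prime_gt_0_nat by blast
  define A where "A = {r. r \<noteq> 0 \<and> iev r \<zeta> = 0}"
  have cycA: "cyc p \<in> A" unfolding A_def using cyc_root[OF z1] cyc_coeff0[OF p0] by auto
  define d where "d = (LEAST d. \<exists>r\<in>A. degree r = d)"
  have "\<exists>r\<in>A. degree r = d" unfolding d_def by (rule LeastI_ex) (use cycA in blast)
  then obtain r where rA: "r \<in> A" and rd: "degree r = d" by blast
  have rmin: "\<And>r'. r' \<in> A \<Longrightarrow> degree r \<le> degree r'"
    unfolding rd d_def by (rule Least_le) blast
  have rnz: "r \<noteq> 0" and rz: "iev r \<zeta> = 0" using rA by (auto simp: A_def)
  have claim: "\<exists>c q. c \<noteq> 0 \<and> smult c Q = r * q" if Q: "iev Q \<zeta> = 0" for Q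
  proof -
    obtain q s where qs: "pseudo_divmod Q r = (q, s)" by (cases "pseudo_divmod Q r") auto
    define c where "c = lead_coeff r ^ (Suc (degree Q) - degree r)"
    have eq: "smult c Q = r * q + s" using pseudo_divmod(1)[OF rnz qs] by (simp add: c_def)
    have cnz: "c \<noteq> 0" using rnz by (simp add: c_def)
    have "iev (smult c Q) \<zeta> = iev (r*q+s) \<zeta>" by (simp only: eq)
    hence sz: "iev s \<zeta> = 0" using Q rz by simp
    have "s = 0"
    proof (rule ccontr)
      assume "s \<noteq> 0"
      hence "s \<in> A" using sz by (simp add: A_def)
      hence "degree r \<le> degree s" by (rule rmin)
      moreover have "degree s < degree r" using pseudo_divmod(2)[OF rnz qs] \<open>s \<noteq> 0\<close> by simp
      ultimately show False by simp
    qed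
    thus ?thesis using eq cnz by auto
  qed
  obtain c q where cnz: "c \<noteq> 0" and cq: "smult c (cyc p) = r * q"
    using claim[OF cyc_root[OF z1]] by blast
  define u where "u = unit_factor c"
  have uu: "u * u = 1" using cnz by (simp add: u_def unit_factor_int_def sgn_if)
  have ppc: "primitive_part (cyc p) = cyc p"
    using content_times_primitive_part[of "cyc p"] cyc_content[OF p0] by simp
  have "smult u (cyc p) = primitive_part r * primitive_part q"
    using arg_cong[OF cq, of primitive_part] by (simp add: primitive_part_smult primitive_part_mult ppc u_def)
  hence "smult u (smult u (cyc p)) = smult u (primitive_part r) * primitive_part q" by simp
  hence ceq: "cyc p = smult u (primitive_part r) * primitive_part q" using uu by simp
  have unz: "u \<noteq> 0" using uu by auto
  have "degree r = 0 \<or> degree q = 0"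
    using cyc_irred[OF pr ceq] unz by (simp add: degree_primitive_part)
  moreover have "degree r \<noteq> 0"
  proof
    assume "degree r = 0"
    then obtain a where "r = [:a:]" by (metis degree_eq_zeroE)
    thus False using rnz rz by simp
  qed
  ultimately have "degree q = 0" by simp
  then obtain q0 where q0: "q = [:q0:]" by (metis degree_eq_zeroE)
  have "iev (smult c (cyc p)) w = iev (r * q) w" by (simp only: cq)
  hence "iev r w * of_int q0 = 0" using cyc_root[OF w1] q0 by auto
  moreover have "q0 \<noteq> 0" using cq q0 cnz cyc_coeff0[OF p0] by (auto dest: arg_cong[of _ _ "\<lambda>x. coeff x 0"])
  ultimately have rw: "iev r w = 0" by simp
  obtain c' q' where c'nz: "c' \<noteq> 0" and cq': "smult c' P = r * q'" using claim[OF P] by blast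
  have "iev (smult c' P) w = iev (r * q') w" by (simp only: cq')
  thus ?thesis using rw c'nz by simp
qed

lemma roots_prod:
  assumes d: "d > 0"
  shows "(\<Prod>\<omega>\<in>{w::complex. w^d = 1}. (z - \<omega>)) = z^d - 1"
proof -
  define R where "R = {w::complex. w^d = 1}"
  have finR: "finite R" unfolding R_def using d by (intro finite_roots_unity) simp
  have cardR: "card R = d" unfolding R_def using d by (rule card_roots_unity_eq)
  define G where "G = (\<Prod>\<omega>\<in>R. [:-\<omega>,1:])"
  have degG: "degree G = d" unfolding G_def by (subst degree_prod_sum_eq) (auto simp: cardR)
  have lG: "lead_coeff G = 1" unfolding G_def by (simp add: lead_coeff_prod)
  define H where "H = monom 1 d - 1 - G"
  have cH: "coeff H j = 0" if "j \<ge> d" for j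
  proof (cases "j = d")
    case True thus ?thesis using d lG degG by (simp add: H_def)
  next
    case False
    hence "j > degree G" using that degG by simp
    thus ?thesis using False d by (simp add: H_def coeff_eq_0)
  qed
  have H0: "H = 0"
  proof (rule ccontr)
    assume Hnz: "H \<noteq> 0"
    have "degree H < d"
    proof (rule ccontr)
      assume "\<not> degree H < d"
      hence "coeff H (degree H) = 0" using cH by simp
      thus False using Hnz by simp
    qed
    moreover have "R \<subseteq> {x. poly H x = 0}"
      using finR by (auto simp: H_def G_def R_def poly_prod poly_monom)
    hence "card R \<le> card {x. poly H x = 0}"
      using poly_roots_finite[OF Hnz] by (rule card_mono[rotated])
    hence "d \<le> degree H" using card_poly_roots_bound[OF Hnz] cardR by simp
    ultimately show False by simp
  qed
  have "poly H z = 0" by (simp add: H0)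
  thus ?thesis by (simp add: H_def G_def R_def poly_prod poly_monom)
qed

lemma root_pow:
  fixes N j :: nat
  assumes N: "N > 0"
  shows "(cis (2*pi/N))^j = 1 \<longleftrightarrow> N dvd j"
proof -
  let ?f = "\<lambda>k. cis (2 * pi * real k / real N)"
  have inj: "inj_on ?f {..<N}" using bij_betw_roots_unity[OF N] by (simp add: bij_betw_def)
  have pw: "(cis (2*pi/N))^j = ?f j" for j by (simp add: DeMoivre mult_ac)
  have N1: "(cis (2*pi/N))^N = 1" using N by (simp add: DeMoivre)
  have "(cis (2*pi/N))^j = (cis (2*pi/N))^(j mod N)"
  proof -
    have e: "(cis (2*pi/N))^(N*(j div N) + j mod N) = ((cis (2*pi/N))^N)^(j div N) * (cis (2*pi/N))^(j mod N)"
      by (simp only: power_add power_mult)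
    have "(cis (2*pi/N))^j = ((cis (2*pi/N))^N)^(j div N) * (cis (2*pi/N))^(j mod N)"
      using e by simp
    thus ?thesis using N1 by simp
  qed
  also have "\<dots> = 1 \<longleftrightarrow> ?f (j mod N) = ?f 0" by (simp add: pw)
  also have "\<dots> \<longleftrightarrow> j mod N = 0" using inj N by (auto simp: inj_on_def)
  finally show ?thesis by (simp add: dvd_eq_mod_eq_0)
qed

definition fterm :: "complex set \<Rightarrow> nat \<times> nat \<Rightarrow> complex \<Rightarrow> complex" where
  "fterm U x z = z ^ (fst x) * (\<Prod>\<omega>\<in>U - {w. w ^ (snd x) = 1}. (z - \<omega>))"

lemma ident_aux:
  fixes PA PB :: "(nat \<times> nat) set" and U :: "complex set"
  assumes fin: "finite PA" "finite PB" "finite U"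
    and uA: "\<forall>x\<in>PA. \<forall>y\<in>PA. snd x = snd y \<longrightarrow> x = y"
    and uB: "\<forall>x\<in>PB. \<forall>y\<in>PB. snd x = snd y \<longrightarrow> x = y"
    and props: "\<forall>x\<in>PA \<union> PB. 0 < snd x \<and> fst x < snd x \<and> {w. w ^ snd x = 1} \<subseteq> U"
    and eq: "\<forall>z. (\<Sum>x\<in>PA. fterm U x z) = (\<Sum>x\<in>PB. fterm U x z)"
    and x0: "(a, N) \<in> PA" "(a, N) \<notin> PB"
    and mx: "\<forall>x\<in>(PA - PB) \<union> (PB - PA). snd x \<le> N"
  shows False
proof -
  have pa: "0 < snd (a,N) \<and> fst (a,N) < snd (a,N) \<and> {w. w ^ snd (a,N) = 1} \<subseteq> U"
    using props x0(1) by blast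
  hence N: "N > 0" and aN: "a < N" and RN: "{w. w ^ N = 1} \<subseteq> U" by simp_all
  define \<omega> where "\<omega> = cis (2*pi/real N)"
  have wp: "\<omega>^j = 1 \<longleftrightarrow> N dvd j" for j unfolding \<omega>_def by (rule root_pow[OF N])
  have wU: "\<omega> \<in> U" using RN wp by auto
  have i: "fterm U x \<omega> = 0" if "\<not> N dvd snd x" for x
  proof -
    have "\<omega> \<in> U - {w. w ^ snd x = 1}" using wU wp that by auto
    hence "(\<Prod>v\<in>U - {w. w ^ snd x = 1}. (\<omega> - v)) = 0"
      using fin(3) by (subst prod_zero_iff) auto
    thus ?thesis unfolding fterm_def by simp
  qed
  have ii: "x \<in> PA \<longleftrightarrow> x \<in> PB" if "N dvd snd x" "snd x \<noteq> N" "x \<in> PA \<union> PB" for x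
  proof -
    have "snd x > 0" using props that(3) by blast
    hence "snd x \<ge> N" using that(1) by (simp add: dvd_imp_le)
    hence "snd x > N" using that(2) by simp
    have "x \<in> (PA - PB) \<union> (PB - PA) \<longrightarrow> snd x \<le> N" using mx by blast
    thus ?thesis using \<open>snd x > N\<close> that(3) by auto
  qed
  have iii: "fterm U (b, N) \<omega> = \<omega>^b * (\<Prod>v\<in>U - {w. w ^ N = 1}. (\<omega> - v))" for b
    by (simp add: fterm_def)
  have "\<omega> \<in> {w. w ^ N = 1}" using wp by simp
  hence Pnz: "(\<Prod>v\<in>U - {w. w ^ N = 1}. (\<omega> - v)) \<noteq> 0"
    using fin(3) by (subst prod_zero_iff) auto
  have wnz: "\<omega> \<noteq> 0" by (simp add: \<omega>_def)
  define W where "W = {x\<in>PA. snd x \<noteq> N \<and> N dvd snd x}"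
  have WB: "W = {x\<in>PB. snd x \<noteq> N \<and> N dvd snd x}" unfolding W_def using ii by blast
  have sA: "(\<Sum>x\<in>{x\<in>PA. snd x \<noteq> N}. fterm U x \<omega>) = (\<Sum>x\<in>W. fterm U x \<omega>)"
    unfolding W_def using fin i by (intro sum.mono_neutral_right) auto
  have sB: "(\<Sum>x\<in>{x\<in>PB. snd x \<noteq> N}. fterm U x \<omega>) = (\<Sum>x\<in>W. fterm U x \<omega>)"
    unfolding WB using fin i by (intro sum.mono_neutral_right) auto
  have split: "(\<Sum>x\<in>P. fterm U x \<omega>) = (\<Sum>x\<in>{x\<in>P. snd x = N}. fterm U x \<omega>) + (\<Sum>x\<in>{x\<in>P. snd x \<noteq> N}. fterm U x \<omega>)"
    if "finite P" for P
  proof -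
    have e: "{x\<in>P. snd x = N} \<union> {x\<in>P. snd x \<noteq> N} = P" by auto
    have "(\<Sum>x\<in>{x\<in>P. snd x = N} \<union> {x\<in>P. snd x \<noteq> N}. fterm U x \<omega>) = (\<Sum>x\<in>{x\<in>P. snd x = N}. fterm U x \<omega>) + (\<Sum>x\<in>{x\<in>P. snd x \<noteq> N}. fterm U x \<omega>)"
      using that by (intro sum.union_disjoint) auto
    thus ?thesis by (simp only: e)
  qed
  have AN: "{x\<in>PA. snd x = N} = {(a,N)}"
  proof -
    have one: "x = (a,N)" if "x \<in> PA" "snd x = N" for x
    proof -
      have i1: "snd x = snd (a,N) \<longrightarrow> x = (a,N)" using bspec[OF bspec[OF uA that(1)] x0(1)] .
      have "snd x = snd (a,N)" using that(2) by simp
      with i1 show ?thesis by (rule mp)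
    qed
    show ?thesis
    proof (rule set_eqI)
      fix x
      show "x \<in> {x\<in>PA. snd x = N} \<longleftrightarrow> x \<in> {(a,N)}"
      proof
        assume "x \<in> {x\<in>PA. snd x = N}"
        hence "x \<in> PA" "snd x = N" by simp_all
        hence "x = (a,N)" by (rule one)
        thus "x \<in> {(a,N)}" by simp
      next
        assume "x \<in> {(a,N)}" hence "x = (a,N)" by simp
        thus "x \<in> {x\<in>PA. snd x = N}" using x0(1) by simp
      qed
    qed
  qed
  have eqN: "(\<Sum>x\<in>{x\<in>PA. snd x = N}. fterm U x \<omega>) = (\<Sum>x\<in>{x\<in>PB. snd x = N}. fterm U x \<omega>)"
    using eq split[OF fin(1)] split[OF fin(2)] sA sB by simp
  show False
  proof (cases "{x\<in>PB. snd x = N} = {}")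
    case True
    with eqN AN have "fterm U (a,N) \<omega> = 0" by simp
    thus False using iii Pnz wnz by simp
  next
    case False
    then obtain b where bB: "(b, N) \<in> PB" by auto
    have BN: "{x\<in>PB. snd x = N} = {(b,N)}"
    proof -
      have one: "x = (b,N)" if "x \<in> PB" "snd x = N" for x
      proof -
        have i1: "snd x = snd (b,N) \<longrightarrow> x = (b,N)" using bspec[OF bspec[OF uB that(1)] bB] .
        have "snd x = snd (b,N)" using that(2) by simp
        with i1 show ?thesis by (rule mp)
      qed
      show ?thesis
    proof (rule set_eqI)
      fix x
      show "x \<in> {x\<in>PB. snd x = N} \<longleftrightarrow> x \<in> {(b,N)}"
      proof
        assume "x \<in> {x\<in>PB. snd x = N}"
        hence "x \<in> PB" "snd x = N" by simp_all
        hence "x = (b,N)" by (rule one)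
        thus "x \<in> {(b,N)}" by simp
      next
        assume "x \<in> {(b,N)}" hence "x = (b,N)" by simp
        thus "x \<in> {x\<in>PB. snd x = N}" using bB by simp
      qed
    qed
    qed
    have "0 < snd (b,N) \<and> fst (b,N) < snd (b,N) \<and> {w. w ^ snd (b,N) = 1} \<subseteq> U"
      using props bB by blast
    hence bN: "b < N" by simp
    have ab: "a \<noteq> b" using bB x0 by auto
    from eqN AN BN have "fterm U (a,N) \<omega> = fterm U (b,N) \<omega>" by simp
    hence wab: "\<omega>^a = \<omega>^b" using iii Pnz by simp
    show False
    proof (cases "a < b")
      case True
      have "\<omega>^b = \<omega>^a * \<omega>^(b-a)" using True by (simp flip: power_add)
      hence "\<omega>^(b-a) = 1" using wab wnz by simp
      hence "N dvd (b-a)" using wp by simp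
      hence "N \<le> b - a" using True by (intro dvd_imp_le) auto
      thus False using True bN by linarith
    next
      case False
      hence "b < a" using ab by simp
      have "\<omega>^a = \<omega>^b * \<omega>^(a-b)" using \<open>b<a\<close> by (simp flip: power_add)
      hence "\<omega>^(a-b) = 1" using wab wnz by simp
      hence "N dvd (a-b)" using wp by simp
      hence "N \<le> a - b" using \<open>b<a\<close> by (intro dvd_imp_le) auto
      thus False using \<open>b<a\<close> aN by linarith
    qed
  qed
qed

lemma ident:
  fixes PA PB :: "(nat \<times> nat) set" and U :: "complex set"
  assumes fin: "finite PA" "finite PB" "finite U"
    and uA: "\<forall>x\<in>PA. \<forall>y\<in>PA. snd x = snd y \<longrightarrow> x = y"
    and uB: "\<forall>x\<in>PB. \<forall>y\<in>PB. snd x = snd y \<longrightarrow> x = y"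
    and props: "\<forall>x\<in>PA \<union> PB. 0 < snd x \<and> fst x < snd x \<and> {w. w ^ snd x = 1} \<subseteq> U"
    and eq: "\<forall>z. (\<Sum>x\<in>PA. fterm U x z) = (\<Sum>x\<in>PB. fterm U x z)"
  shows "PA = PB"
proof (rule ccontr)
  assume ne: "PA \<noteq> PB"
  define X where "X = (PA - PB) \<union> (PB - PA)"
  have Xne: "X \<noteq> {}" using ne unfolding X_def by auto
  have Xfin: "finite X" using fin unfolding X_def by auto
  define N where "N = Max (snd ` X)"
  have "N \<in> snd ` X" unfolding N_def using Xne Xfin by (intro Max_in) auto
  then obtain a where aX: "(a, N) \<in> X" by auto
  have mx: "\<forall>x\<in>X. snd x \<le> N" unfolding N_def using Xfin by auto
  show False
  proof (cases "(a, N) \<in> PA")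
    case True
    hence "(a,N) \<notin> PB" using aX X_def by auto
    thus False using ident_aux[OF fin uA uB props eq True] mx X_def by auto
  next
    case False
    hence a1: "(a,N) \<in> PB" using aX X_def by auto
    have props': "\<forall>x\<in>PB \<union> PA. 0 < snd x \<and> fst x < snd x \<and> {w. w ^ snd x = 1} \<subseteq> U"
      using props by auto
    have mx': "\<forall>x\<in>(PB - PA) \<union> (PA - PB). snd x \<le> N" using mx X_def by auto
    show False using ident_aux[OF fin(2,1,3) uB uA props' _ a1 False mx'] eq by auto
  qed
qed

lemma S_finite:
  assumes "finite M"
  shows "finite (S_set M)"
proof -
  have "S_set M \<subseteq> (\<lambda>(d,r). of_nat r / of_nat d) ` (SIGMA d:M. {..<d})"
    unfolding S_set_def by force
  moreover have "finite (SIGMA d:M. {..<d})" using assms by auto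
  ultimately show ?thesis by (meson finite_imageI finite_subset)
qed

lemma mod_le_card:
  assumes "finite M" "d \<in> M" "d > 0"
  shows "d \<le> card (S_set M)"
proof -
  have inj: "inj_on (\<lambda>r. of_nat r / of_nat d :: rat) {..<d}"
    using assms(3) by (auto simp: inj_on_def)
  have "(\<lambda>r. of_nat r / of_nat d :: rat) ` {..<d} \<subseteq> S_set M"
    unfolding S_set_def using assms(2) by auto
  from card_inj_on_le[OF inj this S_finite[OF assms(1)]] show ?thesis by simp
qed

lemma U_sub:
  assumes "\<forall>d\<in>M. d > 0"
  shows "{w::complex. \<exists>d\<in>M. w^d = 1} \<subseteq> (\<lambda>q. cis (2*pi*of_rat q)) ` S_set M"
proof
  fix w :: complex assume "w \<in> {w. \<exists>d\<in>M. w^d = 1}"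
  then obtain d where d: "d \<in> M" "w^d = 1" by auto
  have d0: "d > 0" using assms d by auto
  have "w \<in> (\<lambda>k. cis (2 * pi * real k / real d)) ` {..<d}"
    using bij_betw_roots_unity[OF d0] d(2) by (auto simp: bij_betw_def)
  then obtain r where r: "r < d" "w = cis (2 * pi * real r / real d)" by auto
  have q: "of_nat r / of_nat d \<in> S_set M" unfolding S_set_def using r d by auto
  have "of_rat (of_nat r / of_nat d) = real r / real d" by (simp add: of_rat_divide)
  hence "w = cis (2*pi*of_rat (of_nat r / of_nat d))" using r by simp
  thus "w \<in> (\<lambda>q. cis (2*pi*of_rat q)) ` S_set M" using q by blast
qed

lemma zeta_pow:
  assumes "primitive_root_unity p \<zeta>"
  shows "\<zeta>^j = 1 \<longleftrightarrow> p dvd j"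
proof -
  have p: "p > 0" "\<zeta>^p = 1" and nz: "\<And>j. 0 < j \<Longrightarrow> j < p \<Longrightarrow> \<zeta>^j \<noteq> 1"
    using assms by (auto simp: primitive_root_unity_def)
  have e: "\<zeta>^(p*(j div p) + j mod p) = (\<zeta>^p)^(j div p) * \<zeta>^(j mod p)"
    by (simp only: power_add power_mult)
  have "\<zeta>^j = \<zeta>^(j mod p)" using e p by simp
  moreover have "\<zeta>^(j mod p) = 1 \<longleftrightarrow> j mod p = 0" using nz[of "j mod p"] p(1) by auto
  ultimately show ?thesis by (simp add: dvd_eq_mod_eq_0)
qed

lemma term_lemma:
  fixes x y P :: complex
  assumes "y \<noteq> 1"
  shows "x / (1 - y) * ((y - 1) * P) = - (x * P)"
proof -
  have "1 - y \<noteq> 0" using assms by simp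
  thus ?thesis by (simp add: field_simps)
qed

theorem corollary1p3:
  fixes k l p :: nat and a n b m :: "nat \<Rightarrow> nat" and \<zeta> :: complex
  assumes n_pos: "\<forall>s<k. 0 < n s" and a_lt: "\<forall>s<k. a s < n s"
    and m_pos: "\<forall>t<l. 0 < m t" and b_lt: "\<forall>t<l. b t < m t"
    and n_dist: "inj_on n {..<k}" and m_dist: "inj_on m {..<l}"
    and p_prime: "prime p"
    and p_big: "p > card (S_set (n ` {..<k} \<union> m ` {..<l}))"
    and zeta: "primitive_root_unity p \<zeta>"
  shows "(k = l \<and> {(a s, n s) | s. s < k} = {(b t, m t) | t. t < l}) \<longleftrightarrow>
         (\<Sum>s<k. \<zeta> ^ a s / (1 - \<zeta> ^ n s)) = (\<Sum>t<l. \<zeta> ^ b t / (1 - \<zeta> ^ m t))"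
proof -
  define PA where "PA = (\<lambda>s. (a s, n s)) ` {..<k}"
  define PB where "PB = (\<lambda>t. (b t, m t)) ` {..<l}"
  have PAe: "{(a s, n s) | s. s < k} = PA" unfolding PA_def by auto
  have PBe: "{(b t, m t) | t. t < l} = PB" unfolding PB_def by auto
  have injA: "inj_on (\<lambda>s. (a s, n s)) {..<k}" using n_dist by (auto simp: inj_on_def)
  have injB: "inj_on (\<lambda>t. (b t, m t)) {..<l}" using m_dist by (auto simp: inj_on_def)
  have sumA: "(\<Sum>s<k. f (a s, n s)) = (\<Sum>x\<in>PA. f x)" for f :: "nat \<times> nat \<Rightarrow> complex"
    unfolding PA_def by (simp add: sum.reindex[OF injA])
  have sumB: "(\<Sum>t<l. f (b t, m t)) = (\<Sum>x\<in>PB. f x)" for f :: "nat \<times> nat \<Rightarrow> complex"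
    unfolding PB_def by (simp add: sum.reindex[OF injB])
  show ?thesis
  proof
    assume "k = l \<and> {(a s, n s) | s. s < k} = {(b t, m t) | t. t < l}"
    hence "PA = PB" using PAe PBe by simp
    thus "(\<Sum>s<k. \<zeta> ^ a s / (1 - \<zeta> ^ n s)) = (\<Sum>t<l. \<zeta> ^ b t / (1 - \<zeta> ^ m t))"
      using sumA[of "\<lambda>x. \<zeta> ^ fst x / (1 - \<zeta> ^ snd x)"] sumB[of "\<lambda>x. \<zeta> ^ fst x / (1 - \<zeta> ^ snd x)"]
      by simp
  next
    assume heq: "(\<Sum>s<k. \<zeta> ^ a s / (1 - \<zeta> ^ n s)) = (\<Sum>t<l. \<zeta> ^ b t / (1 - \<zeta> ^ m t))"
    define M where "M = n ` {..<k} \<union> m ` {..<l}"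
    have finM: "finite M" unfolding M_def by simp
    have Mpos: "\<forall>d\<in>M. d > 0" unfolding M_def using n_pos m_pos by auto
    have Mlt: "\<forall>d\<in>M. d < p"
    proof
      fix d assume d: "d \<in> M"
      have "d \<le> card (S_set M)" using mod_le_card[OF finM d] Mpos d by blast
      thus "d < p" using p_big unfolding M_def by simp
    qed
    define U where "U = {w::complex. \<exists>d\<in>M. w^d = 1}"
    have Usub: "U \<subseteq> (\<lambda>q. cis (2*pi*of_rat q)) ` S_set M" unfolding U_def by (rule U_sub[OF Mpos])
    have finU: "finite U" using Usub S_finite[OF finM] by (meson finite_imageI finite_subset)
    have cardU: "card U < p"
    proof -
      have "card U \<le> card ((\<lambda>q. cis (2*pi*of_rat q)) ` S_set M)"
        using Usub S_finite[OF finM] by (intro card_mono) auto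
      also have "\<dots> \<le> card (S_set M)" by (rule card_image_le[OF S_finite[OF finM]])
      finally show ?thesis using p_big unfolding M_def by simp
    qed
    have p1: "p > 1" using p_prime prime_gt_1_nat by blast
    have zp: "\<zeta>^j = 1 \<longleftrightarrow> p dvd j" for j by (rule zeta_pow[OF zeta])
    have znz: "\<zeta> \<noteq> 0"
    proof
      assume "\<zeta> = 0"
      moreover have "\<zeta>^p = 1" using zp by simp
      ultimately have "(0::complex)^p = 1" by simp
      thus False using p1 by (simp add: power_0_left)
    qed
    have wnot: "(\<zeta>^c)^d \<noteq> 1" if "0 < c" "c < p" "d \<in> M" for c d
    proof
      assume "(\<zeta>^c)^d = 1"
      hence "\<zeta>^(c*d) = 1" by (simp add: power_mult)
      hence "p dvd c * d" using zp by blast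
      hence "p dvd c \<or> p dvd d" using p_prime by (simp add: prime_dvd_mult_iff)
      moreover have "0 < d" "d < p" using Mpos Mlt that(3) by auto
      ultimately show False using that by (auto dest: dvd_imp_le)
    qed
    define D where "D z = (\<Sum>s<k. z ^ a s / (1 - z ^ n s)) - (\<Sum>t<l. z ^ b t / (1 - z ^ m t))" for z :: complex
    have D0: "D \<zeta> = 0" using heq by (simp add: D_def)
    define E where "E d = monom 1 d - (1::int poly)" for d
    define Ra where "Ra = (\<Sum>s<k. monom 1 (a s) * ((\<Prod>s'\<in>{..<k}-{s}. E (n s')) * (\<Prod>t<l. E (m t))))"
    define Rb where "Rb = (\<Sum>t<l. monom 1 (b t) * ((\<Prod>s<k. E (n s)) * (\<Prod>t'\<in>{..<l}-{t}. E (m t'))))"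
    define Den where "Den z = (\<Prod>s<k. z^(n s) - 1) * (\<Prod>t<l. z^(m t) - 1)" for z :: complex
    have Rid: "iev (Rb - Ra) z = D z * Den z" if nz: "\<forall>d\<in>M. z^d \<noteq> 1" for z
    proof -
      have A: "z ^ a s / (1 - z ^ n s) * Den z = - (z^a s * ((\<Prod>s'\<in>{..<k}-{s}. z^(n s') - 1) * (\<Prod>t<l. z^(m t) - 1)))"
        if "s < k" for s
      proof -
        have e: "Den z = (z^(n s) - 1) * ((\<Prod>s'\<in>{..<k}-{s}. z^(n s') - 1) * (\<Prod>t<l. z^(m t) - 1))"
          unfolding Den_def using that by (simp add: prod.remove[of "{..<k}" s] mult.assoc)
        have ne: "z^(n s) \<noteq> 1" using nz that unfolding M_def by auto
        show ?thesis unfolding e by (rule term_lemma[OF ne])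
      qed
      have B: "z ^ b t / (1 - z ^ m t) * Den z = - (z^b t * ((\<Prod>s<k. z^(n s) - 1) * (\<Prod>t'\<in>{..<l}-{t}. z^(m t') - 1)))"
        if "t < l" for t
      proof -
        have e: "Den z = (z^(m t) - 1) * ((\<Prod>s<k. z^(n s) - 1) * (\<Prod>t'\<in>{..<l}-{t}. z^(m t') - 1))"
          unfolding Den_def using that by (simp add: prod.remove[of "{..<l}" t] mult_ac)
        have ne: "z^(m t) \<noteq> 1" using nz that unfolding M_def by auto
        show ?thesis unfolding e by (rule term_lemma[OF ne])
      qed
      have "D z * Den z = (\<Sum>s<k. z ^ a s / (1 - z ^ n s) * Den z) - (\<Sum>t<l. z ^ b t / (1 - z ^ m t) * Den z)"
        by (simp add: D_def sum_distrib_right left_diff_distrib)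
      also have "\<dots> = (\<Sum>s<k. - (z^a s * ((\<Prod>s'\<in>{..<k}-{s}. z^(n s') - 1) * (\<Prod>t<l. z^(m t) - 1))))
          - (\<Sum>t<l. - (z^b t * ((\<Prod>s<k. z^(n s) - 1) * (\<Prod>t'\<in>{..<l}-{t}. z^(m t') - 1))))"
        using A B by simp
      also have "\<dots> = iev (Rb - Ra) z"
        by (simp add: Ra_def Rb_def E_def sum_negf)
      finally show ?thesis by simp
    qed
    have Dw: "D (\<zeta>^c) = 0" if c: "0 < c" "c < p" for c
    proof -
      have nzz: "\<forall>d\<in>M. \<zeta>^d \<noteq> 1" using wnot[of 1] p1 by simp
      have "iev (Rb - Ra) \<zeta> = 0" using Rid[OF nzz] D0 by simp
      moreover have "\<zeta>^p = 1" "\<zeta> \<noteq> 1" using zp[of p] zp[of 1] p1 by auto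
      moreover have "(\<zeta>^c)^p = 1" "\<zeta>^c \<noteq> 1" using zp[of "c*p"] zp[of c] c
        by (auto simp: power_mult[symmetric] dest: dvd_imp_le)
      ultimately have r0: "iev (Rb - Ra) (\<zeta>^c) = 0" using galois[OF p_prime] by blast
      have nzw: "\<forall>d\<in>M. (\<zeta>^c)^d \<noteq> 1" using wnot c by blast
      have "iev (Rb - Ra) (\<zeta>^c) = D (\<zeta>^c) * Den (\<zeta>^c)" by (rule Rid[OF nzw])
      hence "D (\<zeta>^c) * Den (\<zeta>^c) = 0" using r0 by simp
      moreover have "Den (\<zeta>^c) \<noteq> 0" using nzw unfolding Den_def M_def by auto
      ultimately show ?thesis by simp
    qed
    define Ud where "Ud d = {w::complex. w^d = 1}" for d :: nat
    have UdU: "Ud d \<subseteq> U" if "d \<in> M" for d using that unfolding U_def Ud_def by blast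
    have cardUd: "card (Ud d) = d" if "d > 0" for d unfolding Ud_def by (rule card_roots_unity_eq[OF that])
    have finUd: "finite (Ud d)" if "d \<in> M" for d using finU UdU[OF that] by (rule finite_subset[rotated])
    define Q where "Q = (\<Sum>s<k. monom 1 (a s) * (\<Prod>\<omega>\<in>U - Ud (n s). [:-\<omega>,1:]))
                      - (\<Sum>t<l. monom 1 (b t) * (\<Prod>\<omega>\<in>U - Ud (m t). [:-\<omega>,1:]))"
    have Qpoly: "poly Q z = (\<Sum>s<k. fterm U (a s, n s) z) - (\<Sum>t<l. fterm U (b t, m t) z)" for z
      by (simp add: Q_def fterm_def Ud_def poly_sum poly_prod poly_monom)
    have fterm_id: "z^x/(1 - z^d) * (\<Prod>\<omega>\<in>U. (z - \<omega>)) = - fterm U (x, d) z" if "d \<in> M" "z \<notin> U" for x d z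
    proof -
      have d0: "d > 0" using Mpos that(1) by blast
      have "(\<Prod>\<omega>\<in>U. (z-\<omega>)) = (\<Prod>\<omega>\<in>U - Ud d. (z-\<omega>)) * (\<Prod>\<omega>\<in>Ud d. (z-\<omega>))"
        by (rule prod.subset_diff[OF UdU[OF that(1)] finU])
      also have "(\<Prod>\<omega>\<in>Ud d. (z-\<omega>)) = z^d - 1" unfolding Ud_def by (rule roots_prod[OF d0])
      finally have e: "(\<Prod>\<omega>\<in>U. (z-\<omega>)) = (z^d - 1) * (\<Prod>\<omega>\<in>U - Ud d. (z-\<omega>))" by (simp add: mult.commute)
      have ne: "z^d \<noteq> 1" using that unfolding U_def by blast
      have "z^x/(1 - z^d) * (\<Prod>\<omega>\<in>U. (z - \<omega>)) = - (z^x * (\<Prod>\<omega>\<in>U - Ud d. (z-\<omega>)))"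
        unfolding e by (rule term_lemma[OF ne])
      thus ?thesis unfolding fterm_def Ud_def by simp
    qed
    have DQ: "D z * (\<Prod>\<omega>\<in>U. (z - \<omega>)) = - poly Q z" if zU: "z \<notin> U" for z
    proof -
      have sA': "(\<Sum>s<k. z^a s/(1-z^n s)) * (\<Prod>\<omega>\<in>U. (z - \<omega>)) = (\<Sum>s<k. - fterm U (a s, n s) z)"
        unfolding sum_distrib_right
      proof (rule sum.cong[OF refl])
        fix s assume "s \<in> {..<k}"
        hence "n s \<in> M" unfolding M_def by auto
        thus "z^a s/(1-z^n s) * (\<Prod>\<omega>\<in>U. (z - \<omega>)) = - fterm U (a s, n s) z" by (rule fterm_id[OF _ zU])
      qed
      have sB': "(\<Sum>t<l. z^b t/(1-z^m t)) * (\<Prod>\<omega>\<in>U. (z - \<omega>)) = (\<Sum>t<l. - fterm U (b t, m t) z)"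
        unfolding sum_distrib_right
      proof (rule sum.cong[OF refl])
        fix t assume "t \<in> {..<l}"
        hence "m t \<in> M" unfolding M_def by auto
        thus "z^b t/(1-z^m t) * (\<Prod>\<omega>\<in>U. (z - \<omega>)) = - fterm U (b t, m t) z" by (rule fterm_id[OF _ zU])
      qed
      have "D z * (\<Prod>\<omega>\<in>U. (z - \<omega>)) = (\<Sum>s<k. z^a s/(1-z^n s)) * (\<Prod>\<omega>\<in>U. (z - \<omega>)) - (\<Sum>t<l. z^b t/(1-z^m t)) * (\<Prod>\<omega>\<in>U. (z - \<omega>))"
        unfolding D_def by (rule left_diff_distrib)
      also have "\<dots> = (\<Sum>s<k. - fterm U (a s, n s) z) - (\<Sum>t<l. - fterm U (b t, m t) z)" by (simp only: sA' sB')
      also have "\<dots> = - poly Q z" by (simp add: Qpoly sum_negf)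
      finally show ?thesis .
    qed
    have Qroots: "poly Q (\<zeta>^c) = 0" if c: "0 < c" "c < p" for c
    proof -
      have "\<zeta>^c \<notin> U" using wnot[OF c] unfolding U_def by blast
      from DQ[OF this] Dw[OF c] show ?thesis by simp
    qed
    have degterm: "degree (monom 1 x * (\<Prod>\<omega>\<in>U - Ud d. [:-\<omega>,1:])) \<le> card U - 1"
      if "d \<in> M" "x < d" for x d
    proof -
      have d0: "d > 0" using Mpos that(1) by blast
      have dU: "d \<le> card U" using card_mono[OF finU UdU[OF that(1)]] cardUd[OF d0] by simp
      have "degree (monom 1 x * (\<Prod>\<omega>\<in>U - Ud d. [:-\<omega>,1:])) \<le> degree (monom (1::complex) x) + degree (\<Prod>\<omega>\<in>U - Ud d. [:-\<omega>,1:])"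
        by (rule degree_mult_le)
      also have "degree (\<Prod>\<omega>\<in>U - Ud d. [:-\<omega>,1:]) \<le> sum (degree \<circ> (\<lambda>\<omega>. [:-\<omega>,1:])) (U - Ud d)"
        using finU by (intro degree_prod_sum_le) auto
      also have "sum (degree \<circ> (\<lambda>\<omega>. [:-\<omega>,1:])) (U - Ud d) = card (U - Ud d)" by simp
      also have "card (U - Ud d) = card U - d"
        using card_Diff_subset[OF finUd[OF that(1)] UdU[OF that(1)]] cardUd[OF d0] by simp
      also have "degree (monom (1::complex) x) \<le> x" by (rule degree_monom_le)
      finally show ?thesis using that(2) dU by linarith
    qed
    have degQ: "degree Q \<le> card U - 1"
    proof -
      have "degree Q \<le> max (degree (\<Sum>s<k. monom 1 (a s) * (\<Prod>\<omega>\<in>U - Ud (n s). [:-\<omega>,1:])))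
                           (degree (\<Sum>t<l. monom 1 (b t) * (\<Prod>\<omega>\<in>U - Ud (m t). [:-\<omega>,1:])))"
        unfolding Q_def by (rule degree_diff_le_max)
      moreover have "degree (\<Sum>s<k. monom 1 (a s) * (\<Prod>\<omega>\<in>U - Ud (n s). [:-\<omega>,1:])) \<le> card U - 1"
      proof (rule degree_sum_le)
        fix s assume "s \<in> {..<k}"
        thus "degree (monom 1 (a s) * (\<Prod>\<omega>\<in>U - Ud (n s). [:-\<omega>,1:])) \<le> card U - 1"
          using a_lt by (intro degterm) (auto simp: M_def)
      qed simp
      moreover have "degree (\<Sum>t<l. monom 1 (b t) * (\<Prod>\<omega>\<in>U - Ud (m t). [:-\<omega>,1:])) \<le> card U - 1"
      proof (rule degree_sum_le)
        fix t assume "t \<in> {..<l}"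
        thus "degree (monom 1 (b t) * (\<Prod>\<omega>\<in>U - Ud (m t). [:-\<omega>,1:])) \<le> card U - 1"
          using b_lt by (intro degterm) (auto simp: M_def)
      qed simp
      ultimately show ?thesis by simp
    qed
    have Q0: "Q = 0"
    proof (rule ccontr)
      assume Qnz: "Q \<noteq> 0"
      define W where "W = (\<lambda>c. \<zeta>^c) ` {1..<p}"
      have injW: "inj_on (\<lambda>c. \<zeta>^c) {1..<p}"
      proof (rule inj_onI)
        fix i j assume ij: "i \<in> {1..<p}" "j \<in> {1..<p}" "\<zeta>^i = \<zeta>^j"
        show "i = j"
        proof (rule ccontr)
          assume "i \<noteq> j"
          then consider "i < j" | "j < i" by linarith
          thus False
          proof cases
            case 1
            have "\<zeta>^j = \<zeta>^i * \<zeta>^(j-i)" using 1 by (simp flip: power_add)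
            moreover have "\<zeta>^i \<noteq> 0" using znz by simp
            ultimately have "\<zeta>^(j-i) = 1" using ij(3) znz by simp
            hence "p dvd (j - i)" using zp by blast
            hence "p \<le> j - i" using 1 by (intro dvd_imp_le) auto
            thus False using ij by auto
          next
            case 2
            have "\<zeta>^i = \<zeta>^j * \<zeta>^(i-j)" using 2 by (simp flip: power_add)
            moreover have "\<zeta>^j \<noteq> 0" using znz by simp
            ultimately have "\<zeta>^(i-j) = 1" using ij(3) znz by simp
            hence "p dvd (i - j)" using zp by blast
            hence "p \<le> i - j" using 2 by (intro dvd_imp_le) auto
            thus False using ij by auto
          qed
        qed
      qed
      have cW: "card W = p - 1" unfolding W_def using card_image[OF injW] by simp
      have "W \<subseteq> {x. poly Q x = 0}" unfolding W_def using Qroots by auto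
      hence "card W \<le> card {x. poly Q x = 0}" using poly_roots_finite[OF Qnz] by (intro card_mono)
      also have "\<dots> \<le> degree Q" by (rule card_poly_roots_bound[OF Qnz])
      finally have "p - 1 \<le> card U - 1" using cW degQ by simp
      thus False using cardU p1 by linarith
    qed
    have eqz: "\<forall>z. (\<Sum>x\<in>PA. fterm U x z) = (\<Sum>x\<in>PB. fterm U x z)"
    proof
      fix z
      have "poly Q z = 0" by (simp add: Q0)
      hence "(\<Sum>s<k. fterm U (a s, n s) z) = (\<Sum>t<l. fterm U (b t, m t) z)" using Qpoly[of z] by simp
      thus "(\<Sum>x\<in>PA. fterm U x z) = (\<Sum>x\<in>PB. fterm U x z)"
        using sumA[of "\<lambda>x. fterm U x z"] sumB[of "\<lambda>x. fterm U x z"] by simp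
    qed
    have uA: "\<forall>x\<in>PA. \<forall>y\<in>PA. snd x = snd y \<longrightarrow> x = y"
      using n_dist unfolding PA_def inj_on_def by auto
    have uB: "\<forall>x\<in>PB. \<forall>y\<in>PB. snd x = snd y \<longrightarrow> x = y"
      using m_dist unfolding PB_def inj_on_def by auto
    have props: "\<forall>x\<in>PA \<union> PB. 0 < snd x \<and> fst x < snd x \<and> {w. w ^ snd x = 1} \<subseteq> U"
      using n_pos a_lt m_pos b_lt unfolding PA_def PB_def U_def M_def by auto
    have "PA = PB"
      by (rule ident[OF _ _ finU uA uB props eqz]) (simp_all add: PA_def PB_def)
    moreover have "k = l"
    proof -
      have "card PA = k" unfolding PA_def using card_image[OF injA] by simp
      moreover have "card PB = l" unfolding PB_def using card_image[OF injB] by simp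
      ultimately show ?thesis using \<open>PA = PB\<close> by simp
    qed
    ultimately show "k = l \<and> {(a s, n s) | s. s < k} = {(b t, m t) | t. t < l}" using PAe PBe by simp
  qed
qed

end
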